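(* Consider the distributed quantized weight-balancing algorithm described in the context on a strongly connected digraph, with step-size $\gamma(k)=2^{-n}$ for $2^n-1\le k\le 2^{n+1}-2$. Then the sequence of weight matrices $\{\mathbf{A}(k)\}_{k\in\mathbb{Z}_+}$, $\mathbf{A}(k)=(a_{ij}(k))$, is bounded.
   Context: $\mathcal{G}=(\mathcal{V},\mathcal{E})$, $\mathcal{V}=\{1,\dots,N\}$, no self-loops, strongly connected; $\mathcal{N}_i^-=\{j:(j,i)\in\mathcal{E}\}$, $\mathcal{N}_i^+=\{j:(i,j)\in\mathcal{E}\}$, $d_i^+=|\mathcal{N}_i^+|$. Algorithm: $a_{ij}(0)=1$ if $j\in\mathcal{N}_i^-$ and $0$ otherwise; $b_i(k)=\sum_{j\in\mathcal{N}_i^-}a_{ij}(k)-\sum_{j\in\mathcal{N}_i^+}a_{ji}(k)$; $n_i(k)=1$ if $b_i(k)\ge d_i^+\gamma(k)$, else $0$; $a_{ij}(k+1)=a_{ij}(k)+n_j(k)\gamma(k)$ for $j\in\mathcal{N}_i^-$ (other entries remain $0$). *)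

theory Defs
  imports Complex_Main
begin

definition gamma :: "nat \<Rightarrow> real" where
  "gamma k = 1 / 2 ^ (THE n::nat. 2 ^ n - 1 \<le> k \<and> k \<le> 2 ^ (n + 1) - 2)"

text \<open>In- and out-neighbourhoods; an edge (j,i) goes from j to i.\<close>
definition in_nbrs :: "('v \<times> 'v) set \<Rightarrow> 'v \<Rightarrow> 'v set" where
  "in_nbrs E i = {j. (j, i) \<in> E}"
definition out_nbrs :: "('v \<times> 'v) set \<Rightarrow> 'v \<Rightarrow> 'v set" where
  "out_nbrs E i = {j. (i, j) \<in> E}"
definition out_deg :: "('v \<times> 'v) set \<Rightarrow> 'v \<Rightarrow> nat" where
  "out_deg E i = card (out_nbrs E i)"

definition imbalance :: "('v \<times> 'v) set \<Rightarrow> ('v \<Rightarrow> 'v \<Rightarrow> real) \<Rightarrow> 'v \<Rightarrow> real" where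
  "imbalance E A i = (\<Sum>j\<in>in_nbrs E i. A i j) - (\<Sum>j\<in>out_nbrs E i. A j i)"

definition nflag :: "('v \<times> 'v) set \<Rightarrow> ('v \<Rightarrow> 'v \<Rightarrow> real) \<Rightarrow> nat \<Rightarrow> 'v \<Rightarrow> real" where
  "nflag E A k i = (if imbalance E A i \<ge> real (out_deg E i) * gamma k then 1 else 0)"

primrec wb :: "('v \<times> 'v) set \<Rightarrow> nat \<Rightarrow> 'v \<Rightarrow> 'v \<Rightarrow> real" where
  "wb E 0 = (\<lambda>i j. if j \<in> in_nbrs E i then 1 else 0)"
| "wb E (Suc k) = (\<lambda>i j. if j \<in> in_nbrs E i
      then wb E k i j + nflag E (wb E k) k j * gamma k else 0)"

end

theory Submission
  imports Defs
begin

definition xx :: "('v \<times> 'v) set \<Rightarrow> nat \<Rightarrow> 'v \<Rightarrow> real" where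
  "xx E k j = 1 + (\<Sum>t<k. nflag E (wb E t) t j * gamma t)"

lemma gamma_pos: "0 < gamma k"
  unfolding gamma_def by simp

lemma gamma_le1: "gamma k \<le> 1"
  unfolding gamma_def by simp

lemma nflag_cases: "nflag E A k i = 0 \<or> nflag E A k i = 1"
  unfolding nflag_def by simp

lemma nflag_nonneg: "0 \<le> nflag E A k i"
  unfolding nflag_def by simp

lemma xx_Suc: "xx E (Suc k) j = xx E k j + nflag E (wb E k) k j * gamma k"
  unfolding xx_def by simp

lemma xx_0: "xx E 0 j = 1"
  unfolding xx_def by simp

lemma xx_ge1: "1 \<le> xx E k j"
proof -
  have "0 \<le> (\<Sum>t<k. nflag E (wb E t) t j * gamma t)"
    by (rule sum_nonneg) (simp add: nflag_nonneg gamma_pos less_imp_le)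
  then show ?thesis unfolding xx_def by simp
qed

lemma wb_eq: "wb E k i j = (if (j, i) \<in> E then xx E k j else 0)"
  by (induction k) (auto simp: in_nbrs_def xx_Suc xx_0)

lemma imb_eq:
  fixes E :: "('v::finite \<times> 'v) set"
  shows "imbalance E (wb E k) i = (\<Sum>j\<in>in_nbrs E i. xx E k j) - real (out_deg E i) * xx E k i"
proof -
  have 1: "(\<Sum>j\<in>in_nbrs E i. wb E k i j) = (\<Sum>j\<in>in_nbrs E i. xx E k j)"
    by (rule sum.cong) (auto simp: wb_eq in_nbrs_def)
  have 2: "(\<Sum>j\<in>out_nbrs E i. wb E k j i) = (\<Sum>j\<in>out_nbrs E i. xx E k i)"
    by (rule sum.cong) (auto simp: wb_eq out_nbrs_def)
  show ?thesis unfolding imbalance_def 1 2 out_deg_def by simp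
qed

lemma sum_in_swap:
  fixes E :: "('v::finite \<times> 'v) set" and f :: "'v \<Rightarrow> real"
  shows "(\<Sum>i\<in>UNIV. \<Sum>j\<in>in_nbrs E i. f j) = (\<Sum>i\<in>UNIV. real (out_deg E i) * f i)"
proof -
  have a: "\<And>i. (\<Sum>j\<in>in_nbrs E i. f j) = (\<Sum>j\<in>UNIV. if (j, i) \<in> E then f j else 0)"
  proof -
    fix i
    have "in_nbrs E i = {j \<in> UNIV. (j, i) \<in> E}" by (simp add: in_nbrs_def)
    then show "(\<Sum>j\<in>in_nbrs E i. f j) = (\<Sum>j\<in>UNIV. if (j, i) \<in> E then f j else 0)"
      using sum.inter_filter[of UNIV f "\<lambda>j. (j, i) \<in> E"] by simp
  qed
  have b: "\<And>j. (\<Sum>i\<in>UNIV. if (j, i) \<in> E then f j else 0) = real (out_deg E j) * f j"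
  proof -
    fix j
    have "out_nbrs E j = {i \<in> UNIV. (j, i) \<in> E}" by (simp add: out_nbrs_def)
    then have "(\<Sum>i\<in>UNIV. if (j, i) \<in> E then f j else 0) = (\<Sum>i\<in>out_nbrs E j. f j)"
      using sum.inter_filter[of UNIV "\<lambda>_. f j" "\<lambda>i. (j, i) \<in> E"] by simp
    then show "(\<Sum>i\<in>UNIV. if (j, i) \<in> E then f j else 0) = real (out_deg E j) * f j"
      by (simp add: out_deg_def)
  qed
  show ?thesis
    unfolding a using sum.swap[of "\<lambda>i j. if (j, i) \<in> E then f j else 0" UNIV UNIV] b by simp
qed

lemma imb_sum0:
  fixes E :: "('v::finite \<times> 'v) set"
  shows "(\<Sum>i\<in>UNIV. imbalance E (wb E k) i) = 0"
  unfolding imb_eq sum_subtractf sum_in_swap by simp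

lemma imb_Suc:
  fixes E :: "('v::finite \<times> 'v) set"
  shows "imbalance E (wb E (Suc k)) i = imbalance E (wb E k) i
     + (\<Sum>j\<in>in_nbrs E i. nflag E (wb E k) k j * gamma k)
     - real (out_deg E i) * (nflag E (wb E k) k i * gamma k)"
  unfolding imb_eq xx_Suc sum.distrib by (simp add: algebra_simps)

lemma inv:
  fixes E :: "('v::finite \<times> 'v) set"
  shows "imbalance E (wb E k) i \<ge> - real (out_deg E i) \<and>
    (xx E k i > 1 \<longrightarrow> imbalance E (wb E k) i \<ge> 0)"
proof (induction k)
  case 0
  then show ?case unfolding imb_eq xx_0 by simp
next
  case (Suc k)
  have s: "(\<Sum>j\<in>in_nbrs E i. nflag E (wb E k) k j * gamma k) \<ge> 0"
    by (rule sum_nonneg) (simp add: nflag_nonneg gamma_pos less_imp_le)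
  show ?case
  proof (cases "nflag E (wb E k) k i = 1")
    case True
    then have "imbalance E (wb E k) i \<ge> real (out_deg E i) * gamma k"
      unfolding nflag_def by (auto split: if_splits)
    then have "imbalance E (wb E (Suc k)) i \<ge> 0"
      using s True unfolding imb_Suc by simp
    then show ?thesis by simp
  next
    case False
    then have f: "nflag E (wb E k) k i = 0" using nflag_cases by metis
    then show ?thesis using Suc s unfolding imb_Suc xx_Suc by simp
  qed
qed


lemma imb_upper:
  fixes E :: "('v::finite \<times> 'v) set"
  shows "imbalance E (wb E k) i \<le> (\<Sum>j\<in>UNIV. real (out_deg E j))"
proof -
  have "(\<Sum>j\<in>UNIV. imbalance E (wb E k) j) = imbalance E (wb E k) i + (\<Sum>j\<in>UNIV - {i}. imbalance E (wb E k) j)"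
    by (simp add: sum.remove)
  moreover have "(\<Sum>j\<in>UNIV - {i}. imbalance E (wb E k) j) \<ge> (\<Sum>j\<in>UNIV - {i}. - real (out_deg E j))"
    by (rule sum_mono) (use inv in blast)
  moreover have "(\<Sum>j\<in>UNIV - {i}. real (out_deg E j)) \<le> (\<Sum>j\<in>UNIV. real (out_deg E j))"
    by (rule sum_mono2) auto
  ultimately show ?thesis using imb_sum0[of E k] by (simp add: sum_negf)
qed

definition gg :: "('v::finite \<times> 'v) set \<Rightarrow> real \<Rightarrow> real" where
  "gg E R = real (card (UNIV :: 'v set)) * R + (\<Sum>j\<in>UNIV. real (out_deg E j))"

lemma prop1:
  fixes E :: "('v::finite \<times> 'v) set"
  assumes "(j, i) \<in> E" "xx E k i \<le> R"
  shows "xx E k j \<le> gg E R"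
proof -
  have jin: "j \<in> in_nbrs E i" using assms(1) by (simp add: in_nbrs_def)
  have "xx E k j \<le> (\<Sum>j\<in>in_nbrs E i. xx E k j)"
  proof (rule member_le_sum[OF jin])
    fix x show "0 \<le> xx E k x" using xx_ge1[of E k x] by linarith
  qed simp
  also have "\<dots> \<le> real (out_deg E i) * xx E k i + (\<Sum>j\<in>UNIV. real (out_deg E j))"
    using imb_upper[of E k i] unfolding imb_eq by simp
  also have "real (out_deg E i) * xx E k i \<le> real (card (UNIV :: 'v set)) * R"
  proof -
    have "out_deg E i \<le> card (UNIV :: 'v set)" unfolding out_deg_def
      by (rule card_mono) auto
    then have "real (out_deg E i) \<le> real (card (UNIV :: 'v set))" by simp
    moreover have "0 \<le> xx E k i" using xx_ge1[of E k i] by linarith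
    ultimately show ?thesis using assms(2) by (intro mult_mono) auto
  qed
  finally show ?thesis unfolding gg_def by simp
qed

lemma prop_pow:
  fixes E :: "('v::finite \<times> 'v) set"
  assumes "(j, i) \<in> E ^^ n" "xx E k i \<le> R"
  shows "xx E k j \<le> (gg E ^^ n) R"
  using assms
proof (induction n arbitrary: i R)
  case 0
  then show ?case by simp
next
  case (Suc n)
  from Suc.prems(1) obtain m where m: "(j, m) \<in> E ^^ n" "(m, i) \<in> E" by auto
  have "xx E k m \<le> gg E R" using prop1 m(2) Suc.prems(2) by blast
  then have "xx E k j \<le> (gg E ^^ n) (gg E R)" using Suc.IH m(1) by blast
  then show ?case by (simp add: funpow_Suc_right del: funpow.simps)
qed

lemma gg_pow_nonneg:
  fixes E :: "('v::finite \<times> 'v) set"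
  shows "0 \<le> (gg E ^^ n) 1"
proof (induction n)
  case 0 then show ?case by simp
next
  case (Suc n)
  have "0 \<le> (\<Sum>j\<in>UNIV. real (out_deg E j))" by (simp add: sum_nonneg)
  then show ?case using Suc by (simp add: gg_def)
qed

lemma bound_if_one:
  fixes E :: "('v::finite \<times> 'v) set"
  assumes sc: "\<forall>u v. (u, v) \<in> E\<^sup>*" and one: "xx E k i = 1"
  shows "xx E k j \<le> (\<Sum>n\<le>card E. (gg E ^^ n) 1)"
proof -
  have fin: "finite E" by simp
  have "(j, i) \<in> E\<^sup>*" using sc by blast
  then obtain n where n: "n \<le> card E" "(j, i) \<in> E ^^ n"
    using rtrancl_finite_eq_relpow[OF fin] by auto
  have "xx E k j \<le> (gg E ^^ n) 1" using prop_pow[OF n(2)] one by simp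
  also have "\<dots> \<le> (\<Sum>n\<le>card E. (gg E ^^ n) 1)"
    by (rule member_le_sum) (use n(1) gg_pow_nonneg in auto)
  finally show ?thesis .
qed

lemma outdeg_pos:
  fixes E :: "('v::finite \<times> 'v) set"
  assumes nl: "\<forall>v. (v, v) \<notin> E" and sc: "\<forall>u v. (u, v) \<in> E\<^sup>*" and ne: "E \<noteq> {}"
  shows "0 < out_deg E i"
proof -
  obtain a b where ab: "(a, b) \<in> E" using ne by auto
  then have "a \<noteq> b" using nl by auto
  then obtain v where v: "v \<noteq> i" by metis
  have "(i, v) \<in> E\<^sup>*" using sc by blast
  then obtain w where "(i, w) \<in> E" using v by (metis converse_rtranclE)
  then have "out_nbrs E i \<noteq> {}" by (auto simp: out_nbrs_def)
  then show ?thesis unfolding out_deg_def by (simp add: card_gt_0_iff)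
qed

theorem lemma4:
  fixes E :: "('v::finite \<times> 'v) set"
  assumes no_loops: "\<forall>v. (v, v) \<notin> E"
    and strongly_connected: "\<forall>u v. (u, v) \<in> E\<^sup>*"
  shows "\<exists>M. \<forall>k i j. \<bar>wb E k i j\<bar> \<le> M"
proof (cases "E = {}")
  case True
  then show ?thesis by (intro exI[of _ 0]) (simp add: wb_eq)
next
  case False
  note neE = False
  define Bnd where "Bnd = (\<Sum>n\<le>card E. (gg E ^^ n) 1)"
  have main: "\<forall>j. xx E k j \<le> Bnd + 1" for k
  proof (induction k)
    case 0
    have "1 \<le> Bnd" unfolding Bnd_def
      using member_le_sum[of 0 "{..card E}" "\<lambda>n. (gg E ^^ n) 1"] gg_pow_nonneg by auto
    then show ?case by (simp add: xx_0)
  next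
    case (Suc k)
    show ?case
    proof (cases "\<exists>i. xx E k i = 1")
      case True
      then obtain i where "xx E k i = 1" by blast
      then have xk: "xx E k j \<le> Bnd" for j
        using bound_if_one[OF strongly_connected] unfolding Bnd_def by blast
      have st: "nflag E (wb E k) k j * gamma k \<le> 1" for j
        using nflag_cases[of E "wb E k" k j] gamma_le1[of k] gamma_pos[of k] by auto
      show ?thesis
      proof
        fix j show "xx E (Suc k) j \<le> Bnd + 1"
          unfolding xx_Suc using xk[of j] st[of j] by linarith
      qed
    next
      case False
      then have gt: "xx E k i > 1" for i
        using xx_ge1[of E k i] False by (metis order_le_imp_less_or_eq)
      have nn: "imbalance E (wb E k) i \<ge> 0" for i using inv[where E=E and k=k and i=i] gt[of i] by blast
      have z: "imbalance E (wb E k) i = 0" for i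
        using sum_nonneg_eq_0_iff[of UNIV "\<lambda>i. imbalance E (wb E k) i"] nn imb_sum0[of E k] by simp
      have "nflag E (wb E k) k i = 0" for i
        using outdeg_pos[OF no_loops strongly_connected neE, of i] gamma_pos[of k] z[of i]
        unfolding nflag_def by (simp add: mult_pos_pos not_le)
      then show ?thesis using Suc unfolding xx_Suc by simp
    qed
  qed
  show ?thesis
  proof (intro exI allI)
    fix k i j
    show "\<bar>wb E k i j\<bar> \<le> Bnd + 1"
    proof -
      have "xx E k j \<le> Bnd + 1" using main[of k] by blast
      then show ?thesis using xx_ge1[of E k j] unfolding wb_eq by auto
    qed
  qed
qed

end
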